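(* Let $N\ge 2$ be an integer and $a>0$ real. Let $H=H^{(N)}(a)$ be the real $N\times N$ tridiagonal matrix with $H_{nn}=a+2n-1$, $H_{n,n+1}=-n$, $H_{n+1,n}=-(a+n)$, all other entries zero. Write $D_n(a)=\prod_{j=1}^{n-1}(a+j)$ (so $D_1(a)=1$). Let $\Theta_0$ be the diagonal matrix with entries $(\Theta_0)_{nn}=(n-1)!/D_n(a)$, $n=1,\dots,N$. Let $\mathcal P_1=\mathcal P_1^{(N)}(a)$ be the real symmetric tridiagonal $N\times N$ matrix with $(\mathcal P_1)_{11}=0$, $$(\mathcal P_1)_{nn}=-\frac{2(n-1)\,(n-1)!}{D_n(a)}\quad(n=2,\dots,N),\qquad (\mathcal P_1)_{n,n+1}=(\mathcal P_1)_{n+1,n}=\frac{n!}{D_n(a)}\quad(n=1,\dots,N-1),$$ and all other entries zero. Then $H^\dagger\mathcal P_1=\mathcal P_1H$. Consequently, for every real $\alpha$ the tridiagonal matrix $\Theta_1(a,\alpha)=\Theta_0+\alpha\mathcal P_1$ satisfies $H^\dagger\Theta_1=\Theta_1H$, and it is a positive definite metric for $H$ whenever $|\alpha|$ is sufficiently small.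
   Context: $H^\dagger$ is the conjugate transpose. A metric for $H$ is a positive definite Hermitian matrix $\Theta$ with $H^\dagger\Theta=\Theta H$. The entries of $\mathcal P_1$ do not depend on $N$ (apart from the truncation). *)

theory Defs
  imports "Jordan_Normal_Form.Matrix"
begin

text \<open>Matrices are indexed from 0: entry (i,j) corresponds to the paper's entry (i+1,j+1).\<close>

definition Dn :: "real \<Rightarrow> nat \<Rightarrow> real" where
  "Dn a n = (\<Prod>j = 1..<n. a + real j)"

definition Hmat :: "nat \<Rightarrow> real \<Rightarrow> real mat" where
  "Hmat N a = mat N N (\<lambda>(i, j).
     let n = i + 1; m = j + 1 in
     if m = n then a + 2 * real n - 1
     else if m = n + 1 then - real n
     else if n = m + 1 then - (a + real m)
     else 0)"

definition Theta0 :: "nat \<Rightarrow> real \<Rightarrow> real mat" where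
  "Theta0 N a = mat N N (\<lambda>(i, j).
     let n = i + 1 in
     if i = j then fact (n - 1) / Dn a n else 0)"

definition P1 :: "nat \<Rightarrow> real \<Rightarrow> real mat" where
  "P1 N a = mat N N (\<lambda>(i, j).
     let n = i + 1; m = j + 1 in
     if m = n then (if n = 1 then 0 else - (2 * real (n - 1) * fact (n - 1)) / Dn a n)
     else if m = n + 1 then fact n / Dn a n
     else if n = m + 1 then fact m / Dn a m
     else 0)"

definition Theta1 :: "nat \<Rightarrow> real \<Rightarrow> real \<Rightarrow> real mat" where
  "Theta1 N a \<alpha> = Theta0 N a + \<alpha> \<cdot>\<^sub>m P1 N a"

text \<open>Real matrices: the conjugate transpose is the transpose.\<close>

definition pos_def_hermitian :: "real mat \<Rightarrow> bool" where
  "pos_def_hermitian T \<longleftrightarrow> square_mat T \<and> transpose_mat T = T \<and>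
     (\<forall>v \<in> carrier_vec (dim_row T). v \<noteq> 0\<^sub>v (dim_row T) \<longrightarrow> v \<bullet> (T *\<^sub>v v) > 0)"

definition is_metric :: "real mat \<Rightarrow> real mat \<Rightarrow> bool" where
  "is_metric H T \<longleftrightarrow> dim_row T = dim_row H \<and> pos_def_hermitian T \<and>
     transpose_mat H * T = T * H"

end

theory Submission imports Defs begin

lemma sum3:
  fixes f :: "nat \<Rightarrow> real"
  assumes "i < N" and z: "\<And>k. k + 1 < i \<or> i + 1 < k \<Longrightarrow> f k = 0"
  shows "(\<Sum>k<N. f k) = (if 0 < i then f (i-1) else 0) + f i + (if i+1 < N then f (i+1) else 0)"
proof -
  let ?S = "{k. k < N \<and> i \<le> k + 1 \<and> k \<le> i + 1}"
  have "(\<Sum>k<N. f k) = (\<Sum>k\<in>?S. f k)"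
    by (rule sum.mono_neutral_right) (auto intro: z)
  also have "... = (if 0 < i then f (i-1) else 0) + f i + (if i+1 < N then f (i+1) else 0)"
  proof (cases i)
    case 0
    show ?thesis
    proof (cases "1 < N")
      case True
      then have "?S = {0, 1}" using 0 by auto
      then show ?thesis using 0 True by simp
    next
      case False
      then have "?S = {0}" using 0 assms(1) by auto
      then show ?thesis using 0 False by simp
    qed
  next
    case (Suc i')
    show ?thesis
    proof (cases "i + 1 < N")
      case True
      then have "?S = {i', i, i+1}" using Suc by auto
      then show ?thesis using Suc True by simp
    next
      case False
      then have "?S = {i', i}" using Suc assms(1) by auto
      then show ?thesis using Suc False by simp
    qed
  qed
  finally show ?thesis .
qed


definition hf :: "real \<Rightarrow> nat \<Rightarrow> nat \<Rightarrow> real" where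
  "hf a i j = (if j = i then a + 2 * real (i+1) - 1 else if j = i + 1 then - real (i+1)
     else if i = j + 1 then - (a + real (j+1)) else 0)"

definition pf :: "real \<Rightarrow> nat \<Rightarrow> nat \<Rightarrow> real" where
  "pf a i j = (if j = i then (if i = 0 then 0 else - (2 * real i * fact i) / Dn a (i+1))
     else if j = i + 1 then fact (i+1) / Dn a (i+1)
     else if i = j + 1 then fact (j+1) / Dn a (j+1) else 0)"

definition tf :: "real \<Rightarrow> nat \<Rightarrow> nat \<Rightarrow> real" where
  "tf a i j = (if i = j then fact i / Dn a (i+1) else 0)"

lemma Hmat_eq: "Hmat N a = mat N N (\<lambda>(i,j). hf a i j)"
  unfolding Hmat_def hf_def by (rule cong_mat) (auto simp: Let_def)

lemma P1_eq: "P1 N a = mat N N (\<lambda>(i,j). pf a i j)"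
  unfolding P1_def pf_def by (rule cong_mat) (auto simp: Let_def)

lemma Theta0_eq: "Theta0 N a = mat N N (\<lambda>(i,j). tf a i j)"
  unfolding Theta0_def tf_def by (rule cong_mat) (auto simp: Let_def)

lemma Dn_1: "Dn a (Suc 0) = 1" by (simp add: Dn_def)
lemma Dn_SS: "Dn a (Suc (Suc n)) = Dn a (Suc n) * (a + real (Suc n))"
  unfolding Dn_def by (simp add: prod.atLeastLessThan_Suc)
lemma Dn_pos: "a > 0 \<Longrightarrow> Dn a n > 0"
  unfolding Dn_def by (rule prod_pos) auto

lemma prodT: "i < N \<Longrightarrow> j < N \<Longrightarrow>
  (transpose_mat (mat N N (\<lambda>(i,j). f i j)) * mat N N (\<lambda>(i,j). g i j)) $$ (i,j) = (\<Sum>k<N. f k i * g k j)"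
  by (simp add: scalar_prod_def lessThan_atLeast0)

lemma prodN: "i < N \<Longrightarrow> j < N \<Longrightarrow>
  (mat N N (\<lambda>(i,j). f i j) * mat N N (\<lambda>(i,j). g i j)) $$ (i,j) = (\<Sum>k<N. f i k * g k j)"
  by (simp add: scalar_prod_def lessThan_atLeast0)


lemma pf_sym: "pf a i j = pf a j i"
  unfolding pf_def by auto

lemma Gexp: assumes "i < N"
  shows "(\<Sum>k<N. hf a k i * g k) = (if 0 < i then hf a (i-1) i * g (i-1) else 0)
     + hf a i i * g i + (if i+1 < N then hf a (i+1) i * g (i+1) else 0)"
  by (rule sum3[OF assms(1)]) (auto simp: hf_def)

lemma alg1:
  fixes a r F D x :: real
  assumes "D \<noteq> 0" "x \<noteq> 0"
  shows "(a + 2*r + 1) * ((r+1)*F / D) + (-x) * (-(2*(r+1)*((r+1)*F)) / (D*x))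
       = (-(r+1)) * (-(2*r*F)/D) + (a + 2*r + 3) * ((r+1)*F / D)"
  using assms by (simp add: field_simps)

lemma alg2:
  fixes a r F D x :: real
  assumes "D \<noteq> 0" "x \<noteq> 0"
  shows "(-x) * ((r+2)*((r+1)*F) / (D*x)) = (-(r+2)) * ((r+1)*F / D)"
  using assms by (simp add: field_simps)

lemma alg3:
  fixes a r F D x :: real
  assumes "D \<noteq> 0" "x \<noteq> 0"
  shows "-x * ((r+1)*F / (D*x)) = -(r+1)*(F/D)"
  using assms by (simp add: field_simps)

lemma entP_lt: assumes "i < j" "j < N" "a > 0"
  shows "(\<Sum>k<N. hf a k i * pf a k j) = (\<Sum>k<N. hf a k j * pf a k i)"
proof -
  have D: "\<And>n. Dn a n > 0" using Dn_pos[OF assms(3)] .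
  have D': "\<And>n. Dn a n \<noteq> 0" using D by (metis less_irrefl)
  have ap: "\<And>n. a + real n \<noteq> 0" using assms(3) by (metis add_pos_nonneg of_nat_0_le_iff less_irrefl)
  have iN: "i < N" using assms by simp
  note L = Gexp[OF iN, of a "\<lambda>k. pf a k j"] and R = Gexp[OF assms(2), of a "\<lambda>k. pf a k i"]
  show ?thesis
  proof (cases "j = Suc i")
    case True
    have x: "a + real i + 1 \<noteq> 0" using assms(3) by simp
    have f1: "(fact (Suc i)::real) = (real i + 1) * fact i" by simp
    have p1: "pf a i (Suc i) = (real i+1)*fact i / Dn a (Suc i)" unfolding pf_def f1 by simp
    have p2: "pf a (Suc i) i = (real i+1)*fact i / Dn a (Suc i)" unfolding pf_def f1 by simp
    have p3: "pf a (Suc i) (Suc i) = -(2*(real i+1)*((real i+1)*fact i)) / (Dn a (Suc i) * (a + real i + 1))"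
      unfolding pf_def f1 by (simp add: Dn_SS algebra_simps)
    have p4: "pf a i i = -(2*real i*fact i)/Dn a (Suc i)" unfolding pf_def by simp
    have h1: "hf a i i = a + 2*real i + 1" "hf a (Suc i) i = -(a + real i + 1)"
      "hf a i (Suc i) = -(real i + 1)" "hf a (Suc i) (Suc i) = a + 2 * real i + 3"
      unfolding hf_def by simp_all
    have "hf a i i * pf a i (Suc i) + hf a (Suc i) i * pf a (Suc i) (Suc i)
        = hf a i (Suc i) * pf a i i + hf a (Suc i) (Suc i) * pf a (Suc i) i"
      unfolding p1 p2 p3 p4 h1 by (rule alg1[OF D' x])
    moreover have "0 < i \<Longrightarrow> pf a (i-1) (Suc i) = 0" "pf a (Suc (Suc i)) i = 0"
      unfolding pf_def by auto
    ultimately show ?thesis unfolding L R using True assms by (cases "i = 0") simp_all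
  next
    case F1: False
    show ?thesis
    proof (cases "j = Suc (Suc i)")
      case True
      have x: "a + real i + 1 \<noteq> 0" using assms(3) by simp
      have f1: "(fact (Suc (Suc i))::real) = (real i + 2) * ((real i + 1) * fact i)" by (simp add: algebra_simps)
      have f2: "(fact (Suc i)::real) = (real i + 1) * fact i" by simp
      have p1: "pf a (Suc i) (Suc (Suc i)) = (real i+2)*((real i+1)*fact i) / (Dn a (Suc i) * (a + real i + 1))"
        unfolding pf_def f1 by (simp add: Dn_SS algebra_simps)
      have p2: "pf a (Suc i) i = (real i+1)*fact i / Dn a (Suc i)" unfolding pf_def f2 by simp
      have h1: "hf a (Suc i) i = -(a + real i + 1)" "hf a (Suc i) (Suc (Suc i)) = -(real i + 2)"
        unfolding hf_def by simp_all
      have "hf a (Suc i) i * pf a (Suc i) (Suc (Suc i)) = hf a (Suc i) (Suc (Suc i)) * pf a (Suc i) i"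
        unfolding p1 p2 h1 by (rule alg2[OF D' x])
      moreover have "0 < i \<Longrightarrow> pf a (i-1) (Suc (Suc i)) = 0" "pf a i (Suc (Suc i)) = 0"
        "pf a (Suc (Suc i)) i = 0" "pf a (Suc (Suc (Suc i))) i = 0"
        unfolding pf_def by auto
      ultimately show ?thesis unfolding L R using True assms by (cases "i = 0") simp_all
    next
      case False
      then show ?thesis unfolding L R using F1 assms by (auto simp: pf_def)
    qed
  qed
qed

lemma commI:
  assumes "\<And>i j. i < N \<Longrightarrow> j < N \<Longrightarrow> (\<Sum>k<N. h k i * g k j) = (\<Sum>k<N. g i k * h k j)"
  shows "transpose_mat (mat N N (\<lambda>(i,j). h i j)) * mat N N (\<lambda>(i,j). g i j)
       = mat N N (\<lambda>(i,j). g i j) * mat N N (\<lambda>(i,j). h i j)"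
proof (rule eq_matI)
  fix i j assume "i < dim_row (mat N N (\<lambda>(i,j). g i j) * mat N N (\<lambda>(i,j). h i j))"
    "j < dim_col (mat N N (\<lambda>(i,j). g i j) * mat N N (\<lambda>(i,j). h i j))"
  then have ij: "i < N" "j < N" by simp_all
  show "(transpose_mat (mat N N (\<lambda>(i,j). h i j)) * mat N N (\<lambda>(i,j). g i j)) $$ (i,j)
      = (mat N N (\<lambda>(i,j). g i j) * mat N N (\<lambda>(i,j). h i j)) $$ (i,j)"
    by (simp only: prodT[OF ij] prodN[OF ij] assms[OF ij])
qed simp_all

lemma EP: assumes "i < N" "j < N" "a > 0"
  shows "(\<Sum>k<N. hf a k i * pf a k j) = (\<Sum>k<N. pf a i k * hf a k j)"
proof -
  have R: "(\<Sum>k<N. pf a i k * hf a k j) = (\<Sum>k<N. hf a k j * pf a k i)"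
    by (rule sum.cong[OF refl]) (metis pf_sym mult.commute)
  have "(\<Sum>k<N. hf a k i * pf a k j) = (\<Sum>k<N. hf a k j * pf a k i)"
  proof (cases i j rule: linorder_cases)
    case less show ?thesis by (rule entP_lt[OF less assms(2,3)])
  next
    case equal then show ?thesis by simp
  next
    case greater show ?thesis by (rule entP_lt[OF greater assms(1,3), symmetric])
  qed
  then show ?thesis unfolding R .
qed

lemma tsum: assumes "j < N"
  shows "(\<Sum>k<N. hf a k i * tf a k j) = hf a j i * tf a j j"
proof -
  have "(\<Sum>k<N. hf a k i * tf a k j) = (\<Sum>k<N. if k = j then hf a j i * tf a j j else 0)"
    by (rule sum.cong) (auto simp: tf_def)
  then show ?thesis using assms by simp
qed

lemma ET: assumes "i < N" "j < N" "a > 0"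
  shows "(\<Sum>k<N. hf a k i * tf a k j) = (\<Sum>k<N. tf a i k * hf a k j)"
proof -
  have R: "(\<Sum>k<N. tf a i k * hf a k j) = (\<Sum>k<N. hf a k j * tf a k i)"
    by (rule sum.cong) (auto simp: tf_def)
  have D: "\<And>n. Dn a n > 0" using Dn_pos[OF assms(3)] .
  have D': "\<And>n. Dn a n \<noteq> 0" using D by (metis less_irrefl)
  have key: "hf a (Suc i) i * tf a (Suc i) (Suc i) = hf a i (Suc i) * tf a i i" for i
  proof -
    have x: "a + real i + 1 \<noteq> 0" using assms(3) by simp
    have "hf a (Suc i) i * tf a (Suc i) (Suc i) = -(a + real i + 1) * ((real i + 1) * fact i / (Dn a (Suc i) * (a + real i + 1)))"
      by (simp add: hf_def tf_def Dn_SS algebra_simps)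
    also have "\<dots> = -(real i + 1) * (fact i / Dn a (Suc i))"
      by (rule alg3[OF D' x])
    also have "\<dots> = hf a i (Suc i) * tf a i i" by (simp add: hf_def tf_def)
    finally show ?thesis .
  qed
  have "hf a j i * tf a j j = hf a i j * tf a i i"
  proof (cases "j = Suc i")
    case True then show ?thesis using key by simp
  next
    case F: False
    show ?thesis
    proof (cases "i = Suc j")
      case True then show ?thesis using key by simp
    next
      case False then show ?thesis using F by (auto simp: hf_def)
    qed
  qed
  then show ?thesis unfolding R tsum[OF assms(2)] tsum[OF assms(1)] .
qed

lemma Theta1_eq: "Theta1 N a \<alpha> = mat N N (\<lambda>(i,j). tf a i j + \<alpha> * pf a i j)"
  unfolding Theta1_def Theta0_eq P1_eq by (rule eq_matI) auto

lemma E1: assumes "i < N" "j < N" "a > 0"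
  shows "(\<Sum>k<N. hf a k i * (tf a k j + \<alpha> * pf a k j)) = (\<Sum>k<N. (tf a i k + \<alpha> * pf a i k) * hf a k j)"
proof -
  have "(\<Sum>k<N. hf a k i * (tf a k j + \<alpha> * pf a k j)) = (\<Sum>k<N. hf a k i * tf a k j) + \<alpha> * (\<Sum>k<N. hf a k i * pf a k j)"
    by (simp add: distrib_left sum.distrib sum_distrib_left algebra_simps)
  also have "\<dots> = (\<Sum>k<N. tf a i k * hf a k j) + \<alpha> * (\<Sum>k<N. pf a i k * hf a k j)"
    using ET[OF assms] EP[OF assms] by simp
  also have "\<dots> = (\<Sum>k<N. (tf a i k + \<alpha> * pf a i k) * hf a k j)"
    by (simp add: distrib_right sum.distrib sum_distrib_left algebra_simps)
  finally show ?thesis .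
qed

lemma part1: "a > 0 \<Longrightarrow> transpose_mat (Hmat N a) * P1 N a = P1 N a * Hmat N a"
  unfolding Hmat_eq P1_eq by (rule commI) (rule EP)

lemma part2: "a > 0 \<Longrightarrow> transpose_mat (Hmat N a) * Theta1 N a \<alpha> = Theta1 N a \<alpha> * Hmat N a"
  unfolding Hmat_eq Theta1_eq by (rule commI) (rule E1)

lemma qf: assumes "v \<in> carrier_vec N"
  shows "v \<bullet> (mat N N (\<lambda>(i,j). t i j) *\<^sub>v v) = (\<Sum>i<N. \<Sum>j<N. v$i * t i j * v$j)"
  using assms by (simp add: scalar_prod_def mult_mat_vec_def lessThan_atLeast0 sum_distrib_left mult.assoc)

lemma tf_pos: "a > 0 \<Longrightarrow> tf a i i > 0"
  unfolding tf_def using Dn_pos[of a] by simp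

lemma sq_le: fixes v :: "nat \<Rightarrow> real" assumes "i < N" shows "(v i)^2 \<le> (\<Sum>k<N. (v k)^2)"
  using member_le_sum[of i "{..<N}" "\<lambda>k. (v k)^2"] assms by simp

lemma prod_le: fixes v :: "nat \<Rightarrow> real" assumes "i < N" "j < N"
  shows "\<bar>v i * v j\<bar> \<le> (\<Sum>k<N. (v k)^2)"
proof -
  have h0: "0 \<le> (\<bar>v i\<bar> - \<bar>v j\<bar>)^2" by simp
  have "2 * (\<bar>v i\<bar> * \<bar>v j\<bar>) \<le> (v i)^2 + (v j)^2"
    using h0 unfolding power2_diff power2_abs by simp
  then have "\<bar>v i * v j\<bar> \<le> ((v i)^2 + (v j)^2) / 2" by (simp add: abs_mult)
  also have "\<dots> \<le> (\<Sum>k<N. (v k)^2)" using sq_le[OF assms(1), of v] sq_le[OF assms(2), of v] by simp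
  finally show ?thesis .
qed

lemma part3: assumes "a > 0"
  shows "\<exists>\<epsilon>>0. \<forall>\<alpha>::real. \<bar>\<alpha>\<bar> < \<epsilon> \<longrightarrow> is_metric (Hmat N a) (Theta1 N a \<alpha>)"
proof -
  define m where "m = Min (insert 1 ((\<lambda>i. tf a i i) ` {..<N}))"
  have m0: "m > 0" unfolding m_def using tf_pos[OF assms] by (subst Min_gr_iff) auto
  have mle: "m \<le> tf a i i" if "i < N" for i unfolding m_def using that by (intro Min_le) auto
  define C where "C = (\<Sum>i<N. \<Sum>j<N. \<bar>pf a i j\<bar>)"
  have C0: "C \<ge> 0" unfolding C_def by (intro sum_nonneg) auto
  define \<epsilon> where "\<epsilon> = m / (C + 1)"
  have e0: "\<epsilon> > 0" unfolding \<epsilon>_def using m0 C0 by simp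
  have "\<forall>\<alpha>::real. \<bar>\<alpha>\<bar> < \<epsilon> \<longrightarrow> is_metric (Hmat N a) (Theta1 N a \<alpha>)"
  proof (intro allI impI)
    fix \<alpha> :: real assume al: "\<bar>\<alpha>\<bar> < \<epsilon>"
    have sym: "transpose_mat (Theta1 N a \<alpha>) = Theta1 N a \<alpha>"
      unfolding Theta1_eq by (rule eq_matI) (auto simp: tf_def pf_sym[of a])
    have quad: "v \<bullet> (Theta1 N a \<alpha> *\<^sub>v v) > 0" if v: "v \<in> carrier_vec N" "v \<noteq> 0\<^sub>v N" for v
    proof -
      define S where "S = (\<Sum>k<N. (v$k)^2)"
      obtain i where i: "i < N" "v$i \<noteq> 0" using v by (metis eq_vecI carrier_vecD index_zero_vec)
      have S0: "S > 0"
      proof -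
        have "0 < (v$i)^2" using i by simp
        also have "\<dots> \<le> S" unfolding S_def by (rule sq_le[OF i(1), of "\<lambda>k. v$k"])
        finally show ?thesis .
      qed
      have Q: "v \<bullet> (Theta1 N a \<alpha> *\<^sub>v v) = (\<Sum>i<N. \<Sum>j<N. v$i * tf a i j * v$j) + \<alpha> * (\<Sum>i<N. \<Sum>j<N. v$i * pf a i j * v$j)"
        unfolding Theta1_eq qf[OF v(1)] by (simp add: algebra_simps sum.distrib sum_distrib_left)
      have A: "(\<Sum>i<N. \<Sum>j<N. v$i * tf a i j * v$j) = (\<Sum>i<N. tf a i i * (v$i)^2)"
      proof (rule sum.cong[OF refl])
        fix i assume "i \<in> {..<N}"
        then have "(\<Sum>j<N. v$i * tf a i j * v$j) = (\<Sum>j<N. if j = i then tf a i i * (v$i)^2 else 0)"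
          by (intro sum.cong) (auto simp: tf_def power2_eq_square)
        then show "(\<Sum>j<N. v$i * tf a i j * v$j) = tf a i i * (v$i)^2" using \<open>i \<in> {..<N}\<close> by simp
      qed
      have A2: "(\<Sum>i<N. tf a i i * (v$i)^2) \<ge> m * S"
        unfolding S_def sum_distrib_left by (intro sum_mono mult_right_mono mle) auto
      have B: "\<bar>\<Sum>i<N. \<Sum>j<N. v$i * pf a i j * v$j\<bar> \<le> C * S"
      proof -
        have "\<bar>\<Sum>i<N. \<Sum>j<N. v$i * pf a i j * v$j\<bar> \<le> (\<Sum>i<N. \<Sum>j<N. \<bar>v$i * pf a i j * v$j\<bar>)"
          by (rule order_trans[OF sum_abs]) (intro sum_mono sum_abs)
        also have "\<dots> \<le> (\<Sum>i<N. \<Sum>j<N. \<bar>pf a i j\<bar> * S)"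
        proof (intro sum_mono)
          fix i j assume "i \<in> {..<N}" "j \<in> {..<N}"
          then have "\<bar>v$i * v$j\<bar> \<le> S" unfolding S_def using prod_le[of i N j "\<lambda>k. v$k"] by simp
          then have "\<bar>pf a i j\<bar> * \<bar>v$i * v$j\<bar> \<le> \<bar>pf a i j\<bar> * S" by (intro mult_left_mono) auto
          then show "\<bar>v$i * pf a i j * v$j\<bar> \<le> \<bar>pf a i j\<bar> * S" by (simp add: abs_mult algebra_simps)
        qed
        also have "\<dots> = C * S" unfolding C_def by (simp add: sum_distrib_right)
        finally show ?thesis .
      qed
      let ?X = "(\<Sum>i<N. \<Sum>j<N. v$i * pf a i j * v$j)"
      have "\<alpha> * ?X \<ge> - (\<bar>\<alpha>\<bar> * (C * S))"
      proof -
        have "\<bar>\<alpha> * ?X\<bar> \<le> \<bar>\<alpha>\<bar> * (C * S)" unfolding abs_mult by (intro mult_left_mono B) auto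
        then show ?thesis by linarith
      qed
      moreover have "\<bar>\<alpha>\<bar> * C \<le> \<epsilon> * C" using al C0 by (intro mult_right_mono) auto
      moreover have "\<epsilon> * C < m" unfolding \<epsilon>_def using m0 C0 by (simp add: field_simps)
      ultimately have "\<alpha> * ?X > - (m * S)"
        using S0 by (smt (verit) mult_strict_right_mono mult.assoc)
      then show ?thesis unfolding Q A using A2 by linarith
    qed
    show "is_metric (Hmat N a) (Theta1 N a \<alpha>)"
      unfolding is_metric_def pos_def_hermitian_def
      using sym quad part2[OF assms, of N \<alpha>]
      by (simp add: Theta1_eq Hmat_eq square_mat.simps)
  qed
  then show ?thesis using e0 by blast
qed

theorem lemma2:
  fixes N :: nat and a :: real
  assumes "N \<ge> 2" and "a > 0"
  shows "transpose_mat (Hmat N a) * P1 N a = P1 N a * Hmat N a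
    \<and> (\<forall>\<alpha>::real. transpose_mat (Hmat N a) * Theta1 N a \<alpha> = Theta1 N a \<alpha> * Hmat N a)
    \<and> (\<exists>\<epsilon>>0. \<forall>\<alpha>::real. \<bar>\<alpha>\<bar> < \<epsilon> \<longrightarrow> is_metric (Hmat N a) (Theta1 N a \<alpha>))"
  using part1[OF assms(2)] part2[OF assms(2)] part3[OF assms(2)] by blast

end
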